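(* Let $0\le\sigma_1<\sigma_2\le1/2$, $0\le\varepsilon_1<\varepsilon_2\le1/2$, $q\in(0,1)$ and $Q=(1-q)\mathrm B(\sigma_1)+q\,\mathrm B(\sigma_2)\in\mathbb B_2^*$. There exists $p\in(0,1)$ such that $W=(1-p)\mathrm B(\varepsilon_1)+p\,\mathrm B(\varepsilon_2)$ is a 4-P-degradation of $Q$ if and only if $$\sigma_1\le\varepsilon_1<(1-q)\sigma_1+q\sigma_2<\varepsilon_2\le\sigma_2 .$$ In that case $p$ is the unique number with $(1-p)\varepsilon_1+p\varepsilon_2=(1-q)\sigma_1+q\sigma_2$.
   Context: A BIDMC $W$ has input uniform on $\{0,1\}$, discrete output alphabet $\mathcal Y$ and transition probabilities $\Pr(y\mid x)$; its LR-profile is $P_W(\varepsilon)=\Pr\big(\mathcal L_W(y)=\varepsilon/(1-\varepsilon)\big)$ with $\mathcal L_W(\hat y)=\Pr(y=\hat y\mid x=0)/\Pr(y=\hat y\mid x=1)$, and $W\cong W'$ if LR-profiles coincide. $W'\preccurlyeq W$ if there is a channel $T$ from the output alphabet of $W$ to that of $W'$ with $\Pr(y'\mid x'=a)=\sum_{y}\Pr(y\mid x=a)T(y'\mid y)$. $\mathrm B(\varepsilon)$ is the BSC with crossover probability $\varepsilon$; $\sum_iq_iW_i$ denotes the random switching channel (use $W_i$ with probability $q_i$ independently of the input and output the index $i$ along with the output). $\mathbb B_n$ is the set of BIDMCs equivalent to $\sum_{i\in[n]}p_i\mathrm B(\varepsilon_i)$ for a probability vector $(p_i)$ and $\varepsilon_i\in[0,1]$;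 $\mathbb B_n^*=\mathbb B_n\setminus\mathbb B_{n-1}$. $P_\epsilon(W)=\frac12\sum_{y}\min\{\Pr(y\mid x=0),\Pr(y\mid x=1)\}$. For a symmetric BIDMC $Q$ and $n\ge1$, $W$ is a $2n$-P-degradation of $Q$ if $W\in\mathbb B_n$, $W\preccurlyeq Q$ and $P_\epsilon(W)=\min\{P_\epsilon(W'):W'\in\mathbb B_n,\ W'\preccurlyeq Q\}$. *)

theory Defs
  imports "HOL-Probability.Probability"
begin

text \<open>The input bit 0 is
  represented by False and 1 by True; the (discrete, i.e. countable) output
  alphabet is encoded into nat.\<close>
type_synonym bidmc = "bool \<Rightarrow> nat pmf"

text \<open>LR-profile: P_W(e) = Pr(L_W(y) = e/(1-e)) with y the output under a uniform
  input. For outputs of positive probability, L_W(y) = e/(1-e) (with the extended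
  convention a/0 = infinity) is written cross-multiplied:
  Pr(y|0) * (1-e) = e * Pr(y|1).\<close>
definition lr_profile :: "bidmc \<Rightarrow> real \<Rightarrow> real" where
  "lr_profile W e =
     (let S = {y. pmf (W False) y + pmf (W True) y > 0 \<and>
                  pmf (W False) y * (1 - e) = e * pmf (W True) y}
      in (measure_pmf.prob (W False) S + measure_pmf.prob (W True) S) / 2)"

definition chan_equiv :: "bidmc \<Rightarrow> bidmc \<Rightarrow> bool" where
  "chan_equiv W W' \<longleftrightarrow> lr_profile W = lr_profile W'"

definition degraded :: "bidmc \<Rightarrow> bidmc \<Rightarrow> bool" where
  "degraded W' W \<longleftrightarrow> (\<exists>T :: nat \<Rightarrow> nat pmf. \<forall>x. W' x = bind_pmf (W x) T)"

definition BSC :: "real \<Rightarrow> bidmc" where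
  "BSC e x = map_pmf (\<lambda>b. if b \<noteq> x then 1 else 0) (bernoulli_pmf e)"

text \<open>Random switching channel sum_{i<n} p_i W_i: choose index i with probability
  p i, use W i, output the pair (i, y) (encoded into nat).\<close>
definition switch :: "nat \<Rightarrow> (nat \<Rightarrow> real) \<Rightarrow> (nat \<Rightarrow> bidmc) \<Rightarrow> bidmc" where
  "switch n p Ws x =
     bind_pmf (embed_pmf (\<lambda>i. if i < n then p i else 0))
       (\<lambda>i. map_pmf (\<lambda>y. prod_encode (i, y)) (Ws i x))"

definition prob_vec :: "nat \<Rightarrow> (nat \<Rightarrow> real) \<Rightarrow> bool" where
  "prob_vec n p \<longleftrightarrow> (\<forall>i<n. 0 \<le> p i) \<and> (\<Sum>i<n. p i) = 1"

definition in_B :: "nat \<Rightarrow> bidmc \<Rightarrow> bool" where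
  "in_B n W \<longleftrightarrow> (\<exists>p e. prob_vec n p \<and> (\<forall>i<n. 0 \<le> e i \<and> e i \<le> 1) \<and>
                         chan_equiv W (switch n p (\<lambda>i. BSC (e i))))"

definition in_B_star :: "nat \<Rightarrow> bidmc \<Rightarrow> bool" where
  "in_B_star n W \<longleftrightarrow> in_B n W \<and> \<not> in_B (n - 1) W"

definition P_err :: "bidmc \<Rightarrow> real" where
  "P_err W = (\<Sum>y. min (pmf (W False) y) (pmf (W True) y)) / 2"

definition P_degradation :: "nat \<Rightarrow> bidmc \<Rightarrow> bidmc \<Rightarrow> bool" where
  "P_degradation n Q W \<longleftrightarrow> in_B n W \<and> degraded W Q \<and>
     (\<forall>W'. in_B n W' \<and> degraded W' Q \<longrightarrow> P_err W \<le> P_err W')"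

definition mix2 :: "real \<Rightarrow> real \<Rightarrow> real \<Rightarrow> bidmc" where
  "mix2 a e1 e2 = switch 2 (\<lambda>i. if i = 0 then 1 - a else a)
                           (\<lambda>i. BSC (if i = 0 then e1 else e2))"

end

theory Submission imports Defs begin

lemma pmf_sums1: "pmf (M :: nat pmf) sums 1"
proof -
  have "pmf M sums (integral\<^sup>L (count_space UNIV) (pmf M))"
    by (rule sums_integral_count_space_nat) (rule integrable_pmf)
  moreover have "integral\<^sup>L (count_space UNIV) (pmf M) = 1"
    by (simp add: integral_pmf)
  ultimately show ?thesis by simp
qed

lemma pmf_bmap:
  assumes "u \<noteq> v" "0 \<le> t" "t \<le> 1"
  shows "pmf (map_pmf (\<lambda>j. if j then u else v) (bernoulli_pmf t)) (y::nat)
     = (if y = u then t else 0) + (if y = v then 1 - t else 0)"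
proof -
  have "pmf (map_pmf (\<lambda>j. if j then u else v) (bernoulli_pmf t)) y
     = sum (pmf (bernoulli_pmf t)) ((\<lambda>j. if j then u else v) -` {y})"
    unfolding pmf_map by (rule measure_measure_pmf_finite) simp
  also have "\<dots> = (if y = u then t else 0) + (if y = v then 1 - t else 0)"
  proof -
    consider "y = u" | "y = v" | "y \<noteq> u \<and> y \<noteq> v" by blast
    then show ?thesis
    proof cases
      case 1
      then have "((\<lambda>j. if j then u else v) -` {y}) = {True}" using assms by (intro set_eqI) auto
      then show ?thesis using 1 assms by auto
    next
      case 2
      then have "((\<lambda>j. if j then u else v) -` {y}) = {False}" using assms by (intro set_eqI) auto
      then show ?thesis using 2 assms by auto
    next
      case 3
      then have "((\<lambda>j. if j then u else v) -` {y}) = {}" by (intro set_eqI) auto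
      then show ?thesis using 3 by auto
    qed
  qed
  finally show ?thesis .
qed

lemma pmf_BSC:
  assumes "0 \<le> e" "e \<le> 1"
  shows "pmf (BSC e x) b = (if b = 0 then (if x then e else 1 - e)
            else if b = 1 then (if x then 1 - e else e) else 0)"
proof -
  have "BSC e x = map_pmf (\<lambda>j. if j then (if x then 0 else 1) else (if x then 1 else 0)) (bernoulli_pmf e)"
    unfolding BSC_def by (intro map_pmf_cong) auto
  then show ?thesis using assms by (cases x) (auto simp: pmf_bmap)
qed

lemma pmf_map_pe:
  "pmf (map_pmf (\<lambda>b. prod_encode (i,b)) M) y
     = (if fst (prod_decode y) = i then pmf M (snd (prod_decode y)) else 0)"
proof -
  obtain j b where y: "y = prod_encode (j,b)" by (metis prod_decode_inverse surj_pair)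
  have inj: "inj (\<lambda>b. prod_encode (i,b))" by (auto simp: inj_def prod_encode_eq)
  show ?thesis
  proof (cases "j = i")
    case True
    then show ?thesis using pmf_map_inj'[OF inj, of M b] y by simp
  next
    case False
    then have "y \<notin> (\<lambda>b. prod_encode (i,b)) ` set_pmf M" using y by (auto simp: prod_encode_eq)
    then show ?thesis using pmf_map_outside y False by (simp add: )
  qed
qed


lemma pe_vals: "prod_encode (0,0) = 0" "prod_encode (0,1) = 1" "prod_encode (1,0) = 2" "prod_encode (1,1) = 4"
  by (simp_all add: prod_encode_def triangle_def)

lemma pe_iff:
  "prod_encode (j,b) = 0 \<longleftrightarrow> j = 0 \<and> b = 0"
  "prod_encode (j,b) = 1 \<longleftrightarrow> j = 0 \<and> b = 1"
  "prod_encode (j,b) = 2 \<longleftrightarrow> j = 1 \<and> b = 0"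
  "prod_encode (j,b) = 4 \<longleftrightarrow> j = 1 \<and> b = 1"
  by (metis pe_vals prod_encode_eq prod.inject)+

definition mixp :: "real \<Rightarrow> real \<Rightarrow> real \<Rightarrow> bool \<Rightarrow> nat \<Rightarrow> real" where
  "mixp a e1 e2 x y = (if y = 0 then (1-a)*(if x then e1 else 1-e1)
      else if y = 1 then (1-a)*(if x then 1-e1 else e1)
      else if y = 2 then a*(if x then e2 else 1-e2)
      else if y = 4 then a*(if x then 1-e2 else e2) else 0)"

lemma pmf_mix2:
  assumes a: "0 \<le> a" "a \<le> 1" and e: "0 \<le> e1" "e1 \<le> 1" "0 \<le> e2" "e2 \<le> 1"
  shows "pmf (mix2 a e1 e2 x) y = mixp a e1 e2 x y"
proof -
  define f where "f = (\<lambda>i::nat. if i < 2 then (if i = 0 then 1 - a else a) else 0)"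
  have fnn: "\<And>i. 0 \<le> f i" using a by (auto simp: f_def)
  have "(\<Sum>i. ennreal (f i)) = (\<Sum>i\<in>{0,1}. ennreal (f i))"
    by (rule suminf_finite) (auto simp: f_def)
  also have "\<dots> = 1" using a by (simp add: f_def ennreal_plus[symmetric] del: ennreal_plus)
  finally have fprob: "(\<integral>\<^sup>+i. ennreal (f i) \<partial>count_space UNIV) = 1"
    by (simp add: nn_integral_count_space_nat)
  have pe: "pmf (embed_pmf f) i = f i" for i by (rule pmf_embed_pmf[OF fnn fprob])
  have pe0: "pmf (embed_pmf f) 0 = 1 - a" using pe[of 0] by (simp add: f_def)
  have pe1: "pmf (embed_pmf f) (Suc 0) = a" using pe[of 1] by (simp add: f_def)
  have "pmf (mix2 a e1 e2 x) y =
     (\<integral>i. pmf (map_pmf (\<lambda>b. prod_encode (i, b)) (BSC (if i = 0 then e1 else e2) x)) y \<partial>measure_pmf (embed_pmf f))"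
    unfolding mix2_def switch_def pmf_bind f_def by simp
  also have "\<dots> = (\<Sum>i\<in>{0,1}. pmf (map_pmf (\<lambda>b. prod_encode (i, b)) (BSC (if i = 0 then e1 else e2) x)) y * pmf (embed_pmf f) i)"
  proof (rule integral_measure_pmf_real)
    fix i assume "i \<in> set_pmf (embed_pmf f)"
    then have "f i \<noteq> 0" by (simp add: set_pmf_iff pe)
    then show "i \<in> {0,1}" by (auto simp: f_def split: if_splits)
  qed simp
  also have "\<dots> = mixp a e1 e2 x y"
  proof -
    obtain j b where y: "y = prod_encode (j,b)" by (metis prod_decode_inverse surj_pair)
    show ?thesis
      unfolding y pmf_map_pe prod_encode_inverse mixp_def pe_iff
      using a e by (auto simp: pe0 pe1 pmf_BSC)
  qed
  finally show ?thesis .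
qed


lemma set_pmf_mix2:
  assumes "0 \<le> a" "a \<le> 1" "0 \<le> e1" "e1 \<le> 1" "0 \<le> e2" "e2 \<le> 1"
  shows "set_pmf (mix2 a e1 e2 x) \<subseteq> {0,1,2,4}"
  using assms by (auto simp: set_pmf_iff pmf_mix2 mixp_def split: if_splits)

lemma dp:
  fixes Q W :: bidmc and T :: "nat \<Rightarrow> nat pmf"
  assumes S: "finite S" "\<And>x. set_pmf (Q x) \<subseteq> S"
    and W: "\<And>x. W x = bind_pmf (Q x) T" and cd: "0 \<le> c" "0 \<le> d"
  shows "(\<Sum>z\<in>S. min (c * pmf (Q False) z) (d * pmf (Q True) z))
          \<le> (\<Sum>y. min (c * pmf (W False) y) (d * pmf (W True) y))"
proof -
  have pw: "pmf (W x) y = (\<Sum>z\<in>S. pmf (T z) y * pmf (Q x) z)" for x y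
    unfolding W pmf_bind by (rule integral_measure_pmf_real) (use S in auto)
  define g where "g z y = pmf (T z) y * min (c * pmf (Q False) z) (d * pmf (Q True) z)" for z y
  have le: "(\<Sum>z\<in>S. g z y) \<le> min (c * pmf (W False) y) (d * pmf (W True) y)" for y
  proof -
    have "g z y \<le> c * (pmf (T z) y * pmf (Q False) z)" for z
    proof -
      have "g z y \<le> pmf (T z) y * (c * pmf (Q False) z)"
        unfolding g_def by (rule mult_left_mono) auto
      then show ?thesis by (simp add: algebra_simps)
    qed
    then have "(\<Sum>z\<in>S. g z y) \<le> (\<Sum>z\<in>S. c * (pmf (T z) y * pmf (Q False) z))"
      by (intro sum_mono)
    moreover have "g z y \<le> d * (pmf (T z) y * pmf (Q True) z)" for z
    proof -
      have "g z y \<le> pmf (T z) y * (d * pmf (Q True) z)"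
        unfolding g_def by (rule mult_left_mono) auto
      then show ?thesis by (simp add: algebra_simps)
    qed
    then have "(\<Sum>z\<in>S. g z y) \<le> (\<Sum>z\<in>S. d * (pmf (T z) y * pmf (Q True) z))"
      by (intro sum_mono)
    ultimately show ?thesis unfolding pw by (simp add: sum_distrib_left)
  qed
  have sg: "(\<lambda>y. \<Sum>z\<in>S. g z y) sums (\<Sum>z\<in>S. min (c * pmf (Q False) z) (d * pmf (Q True) z))"
  proof (rule sums_sum)
    fix z show "g z sums min (c * pmf (Q False) z) (d * pmf (Q True) z)"
      unfolding g_def using sums_mult2[OF pmf_sums1[of "T z"]] by simp
  qed
  have sW: "(\<lambda>y. c * pmf (W False) y) sums c" using sums_mult[OF pmf_sums1] by simp
  have "summable (\<lambda>y. min (c * pmf (W False) y) (d * pmf (W True) y))"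
    by (rule summable_comparison_test'[OF sums_summable[OF sW], of 0]) (use cd in auto)
  then show ?thesis by (intro sums_le[OF le sg]) (rule summable_sums)
qed

lemma Rm_mix2:
  assumes "0 \<le> a" "a \<le> 1" "0 \<le> e1" "e1 \<le> 1" "0 \<le> e2" "e2 \<le> 1"
  shows "(\<Sum>y. min (c * pmf (mix2 a e1 e2 False) y) (d * pmf (mix2 a e1 e2 True) y))
    = (\<Sum>y\<in>{0,1,2,4}. min (c * mixp a e1 e2 False y) (d * mixp a e1 e2 True y))"
  using assms by (subst suminf_finite[of "{0,1,2,4}"]) (auto simp: pmf_mix2 mixp_def)

lemma G1:
  fixes w e l :: real
  assumes w: "0 \<le> w" and e: "0 \<le> e" "e \<le> 1/2" and l: "0 \<le> l" "l \<le> 1/2"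
  shows "min ((1-l)*(w*(1-e))) (l*(w*e)) + min ((1-l)*(w*e)) (l*(w*(1-e))) = w * min e l"
proof -
  have 1: "l*e \<le> (1-l)*(1-e)" using mult_mono[of l "1-l" e "1-e"] e l by auto
  have a: "l*(w*e) \<le> (1-l)*(w*(1-e))" using mult_left_mono[OF 1 w] by (simp add: algebra_simps)
  show ?thesis
  proof (cases "e \<le> l")
    case True
    then have "(1-l)*e \<le> l*(1-e)" by (simp add: algebra_simps)
    then have "(1-l)*(w*e) \<le> l*(w*(1-e))" using mult_left_mono[OF _ w] by (simp add: algebra_simps)
    then show ?thesis using a True by (simp add: min_def algebra_simps)
  next
    case False
    then have "(1-l)*e \<ge> l*(1-e)" by (simp add: algebra_simps)
    then have "(1-l)*(w*e) \<ge> l*(w*(1-e))" using mult_left_mono[OF _ w] by (simp add: algebra_simps)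
    then show ?thesis using a False by (simp add: min_def algebra_simps)
  qed
qed

lemma G2:
  fixes w e :: real
  assumes w: "0 \<le> w" and e: "0 \<le> e" "e \<le> 1/2"
  shows "min (1*(w*(1-e))) (1*(w*e)) + min (1*(w*e)) (1*(w*(1-e))) = 2 * (w * e)"
proof -
  have "w*e \<le> w*(1-e)" using mult_left_mono[OF _ w, of e "1-e"] e by simp
  then show ?thesis by (simp add: min_def)
qed

lemma Rm_mix2':
  assumes "0 \<le> a" "a \<le> 1" "0 \<le> e1" "e1 \<le> 1" "0 \<le> e2" "e2 \<le> 1"
  shows "(\<Sum>y. min (c * pmf (mix2 a e1 e2 False) y) (d * pmf (mix2 a e1 e2 True) y))
    = (min (c*((1-a)*(1-e1))) (d*((1-a)*e1)) + min (c*((1-a)*e1)) (d*((1-a)*(1-e1))))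
      + (min (c*(a*(1-e2))) (d*(a*e2)) + min (c*(a*e2)) (d*(a*(1-e2))))"
  unfolding Rm_mix2[OF assms] by (simp add: mixp_def)

lemma Rl_mix2:
  assumes "0 \<le> a" "a \<le> 1" "0 \<le> e1" "e1 \<le> 1/2" "0 \<le> e2" "e2 \<le> 1/2" "0 \<le> l" "l \<le> 1/2"
  shows "(\<Sum>y. min ((1-l) * pmf (mix2 a e1 e2 False) y) (l * pmf (mix2 a e1 e2 True) y))
    = (1-a) * min e1 l + a * min e2 l"
  using assms by (simp add: Rm_mix2' G1)

lemma R1_mix2:
  assumes "0 \<le> a" "a \<le> 1" "0 \<le> e1" "e1 \<le> 1/2" "0 \<le> e2" "e2 \<le> 1/2"
  shows "(\<Sum>y. min (1 * pmf (mix2 a e1 e2 False) y) (1 * pmf (mix2 a e1 e2 True) y))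
    = 2 * ((1-a) * e1 + a * e2)"
  using assms by (simp only: Rm_mix2' G2) (simp add: algebra_simps)

lemma Perr_mix2:
  assumes "0 \<le> a" "a \<le> 1" "0 \<le> e1" "e1 \<le> 1/2" "0 \<le> e2" "e2 \<le> 1/2"
  shows "P_err (mix2 a e1 e2) = (1-a) * e1 + a * e2"
  using R1_mix2[OF assms] unfolding P_err_def by simp

lemma dp_mix:
  assumes "0 \<le> a" "a \<le> 1" "0 \<le> e1" "e1 \<le> 1" "0 \<le> e2" "e2 \<le> 1"
    and W: "\<And>x. W x = bind_pmf (mix2 a e1 e2 x) T" and cd: "0 \<le> c" "0 \<le> d"
  shows "(\<Sum>y. min (c * pmf (mix2 a e1 e2 False) y) (d * pmf (mix2 a e1 e2 True) y))
          \<le> (\<Sum>y. min (c * pmf (W False) y) (d * pmf (W True) y))"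
  unfolding Rm_mix2[OF assms(1-6)]
  using dp[of "{0,1,2,4}" "mix2 a e1 e2", OF _ set_pmf_mix2[OF assms(1-6)] W cd]
  using assms by (simp add: pmf_mix2)


lemma lin_helper:
  fixes a b q r1 r2 w e :: real
  assumes M1: "a*(1-q) + b*q = w" and M2: "a*((1-q)*r1) + b*(q*r2) = w*e"
  shows "a*((1-q)*(1-r1)) + b*(q*(1-r2)) = w*(1-e)"
proof -
  have "a*((1-q)*(1-r1)) + b*(q*(1-r2)) = (a*(1-q) + b*q) - (a*((1-q)*r1) + b*(q*r2))"
    by (simp add: algebra_simps)
  then show ?thesis using M1 M2 by (simp add: algebra_simps)
qed

lemma constr:
  fixes p r1 r2 e1 e2 :: real
  assumes s: "0 \<le> r1" "r1 < r2" "r2 \<le> 1" and e: "r1 \<le> e1" "e1 < e2" "e2 \<le> r2"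
    and p: "0 < p" "p < 1"
    and mean: "(1-p)*e1 + p*e2 = (1-q)*r1 + q*r2" and q: "0 < q" "q < 1"
  shows "degraded (mix2 p e1 e2) (mix2 q r1 r2)"
proof -
  define U where "U = p*(r2-e2)/(r2-r1)"
  define V where "V = p*(e2-r1)/(r2-r1)"
  define t0 where "t0 = U/(1-q)"
  define t1 where "t1 = V/q"
  have d: "r2 - r1 > 0" using s by simp
  have hU: "U*(r2-r1) = p*(r2-e2)" unfolding U_def using d by simp
  have hV: "V*(r2-r1) = p*(e2-r1)" unfolding V_def using d by simp
  have "(U+V)*(r2-r1) = p*(r2-r1)" using hU hV by algebra
  then have f1: "U + V = p" using d by simp
  have "(U*r1+V*r2)*(r2-r1) = (p*e2)*(r2-r1)" using hU hV by algebra
  then have f2: "U*r1 + V*r2 = p*e2" using d by simp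
  have U0: "0 \<le> U" unfolding U_def using p e d by auto
  have V0: "0 \<le> V" unfolding V_def using p e d by auto
  have "(1-q-U)*(r2-r1) = (1-p)*(r2-e1)" using hU mean by algebra
  moreover have "0 \<le> (1-p)*(r2-e1)" using p e by simp
  ultimately have "0 \<le> (1-q-U)*(r2-r1)" by simp
  then have U1: "U \<le> 1 - q" using d by (simp add: zero_le_mult_iff)
  have "(q-V)*(r2-r1) = (1-p)*(e1-r1)" using hV mean by algebra
  moreover have "0 \<le> (1-p)*(e1-r1)" using p e by simp
  ultimately have "0 \<le> (q-V)*(r2-r1)" by simp
  then have V1: "V \<le> q" using d by (simp add: zero_le_mult_iff)
  have t0: "0 \<le> t0" "t0 \<le> 1" unfolding t0_def using U0 U1 q by auto
  have t1: "0 \<le> t1" "t1 \<le> 1" unfolding t1_def using V0 V1 q by auto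
  have hU': "(1-q)*t0 = U" unfolding t0_def using q by simp
  have hV': "q*t1 = V" unfolding t1_def using q by simp
  define T :: "nat \<Rightarrow> nat pmf" where "T z = (if z = 0 then map_pmf (\<lambda>j. if j then 2 else 0) (bernoulli_pmf t0)
     else if z = 1 then map_pmf (\<lambda>j. if j then 4 else 1) (bernoulli_pmf t0)
     else if z = 2 then map_pmf (\<lambda>j. if j then 2 else 0) (bernoulli_pmf t1)
     else map_pmf (\<lambda>j. if j then 4 else 1) (bernoulli_pmf t1))" for z :: nat
  have s12: "0 \<le> r1" "r1 \<le> 1" "0 \<le> r2" "r2 \<le> 1" using s by auto
  have e12: "0 \<le> e1" "e1 \<le> 1" "0 \<le> e2" "e2 \<le> 1" using s e by auto
  have "mix2 p e1 e2 x = bind_pmf (mix2 q r1 r2 x) T" for x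
  proof (rule pmf_eqI)
    fix y
    have "pmf (bind_pmf (mix2 q r1 r2 x) T) y = (\<Sum>z\<in>{0,1,2,4}. pmf (T z) y * pmf (mix2 q r1 r2 x) z)"
      unfolding pmf_bind
      by (rule integral_measure_pmf_real) (use set_pmf_mix2[of q r1 r2, OF _ _ s12] q in auto)
    also have "\<dots> = (\<Sum>z\<in>{0,1,2,4}. pmf (T z) y * mixp q r1 r2 x z)"
      using q s12 by (simp add: pmf_mix2)
    also have "\<dots> = pmf (T 0) y * mixp q r1 r2 x 0 + pmf (T 1) y * mixp q r1 r2 x 1
        + pmf (T 2) y * mixp q r1 r2 x 2 + pmf (T 4) y * mixp q r1 r2 x 4"
      by (simp add: algebra_simps)
    also have "\<dots> = mixp p e1 e2 x y"
    proof -
      have T0: "pmf (T 0) y = (if y = 2 then t0 else 0) + (if y = 0 then 1 - t0 else 0)" for y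
        unfolding T_def using t0 by (simp add: pmf_bmap)
      have T1: "pmf (T 1) y = (if y = 4 then t0 else 0) + (if y = 1 then 1 - t0 else 0)" for y
        unfolding T_def using t0 by (simp add: pmf_bmap)
      have T1s: "pmf (T (Suc 0)) y = (if y = 4 then t0 else 0) + (if y = 1 then 1 - t0 else 0)" for y
        using T1 by simp
      have T2: "pmf (T 2) y = (if y = 2 then t1 else 0) + (if y = 0 then 1 - t1 else 0)" for y
        unfolding T_def using t1 by (simp add: pmf_bmap)
      have T4: "pmf (T 4) y = (if y = 4 then t1 else 0) + (if y = 1 then 1 - t1 else 0)" for y
        unfolding T_def using t1 by (simp add: pmf_bmap)
      have M3: "t0*(1-q) + t1*q = p" using hU' hV' f1 by (simp add: mult.commute)
      have M4: "t0*((1-q)*r1) + t1*(q*r2) = p*e2"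
      proof -
        have "t0*((1-q)*r1) + t1*(q*r2) = ((1-q)*t0)*r1 + (q*t1)*r2" by simp
        then show ?thesis using hU' hV' f2 by simp
      qed
      have M1: "(1-t0)*(1-q) + (1-t1)*q = 1-p"
      proof -
        have "(1-t0)*(1-q) + (1-t1)*q = 1 - (t0*(1-q) + t1*q)" by (simp add: algebra_simps)
        then show ?thesis using M3 by simp
      qed
      have M2: "(1-t0)*((1-q)*r1) + (1-t1)*(q*r2) = (1-p)*e1"
      proof -
        have "(1-t0)*((1-q)*r1) + (1-t1)*(q*r2) = ((1-q)*r1 + q*r2) - (t0*((1-q)*r1) + t1*(q*r2))"
          by (simp add: algebra_simps)
        also have "\<dots> = ((1-p)*e1 + p*e2) - p*e2" using M4 mean by simp
        finally show ?thesis by simp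
      qed
      note N2 = lin_helper[OF M1 M2]
      note N4 = lin_helper[OF M3 M4]
      consider "y = 0" | "y = 1" | "y = 2" | "y = 4" | "y \<notin> {0,1,2,4}" by blast
      then show ?thesis
      proof cases
        case 1 show ?thesis unfolding 1
          by (cases x) (simp_all add: T0 T1 T1s T2 T4 mixp_def M2 M4 N2 N4)
      next
        case 2 show ?thesis unfolding 2
          by (cases x) (simp_all add: T0 T1 T1s T2 T4 mixp_def M2 M4 N2 N4)
      next
        case 3 show ?thesis unfolding 3
          by (cases x) (simp_all add: T0 T1 T1s T2 T4 mixp_def M2 M4 N2 N4)
      next
        case 4 show ?thesis unfolding 4
          by (cases x) (simp_all add: T0 T1 T1s T2 T4 mixp_def M2 M4 N2 N4)
      next
        case 5 then show ?thesis by (auto simp: T0 T1 T1s T2 T4 mixp_def)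
      qed
    qed
    finally show "pmf (mix2 p e1 e2 x) y = pmf (bind_pmf (mix2 q r1 r2 x) T) y"
      using p e12 by (simp add: pmf_mix2)
  qed
  then show ?thesis unfolding degraded_def by blast
qed

lemma key:
  fixes r1 r2 e1 e2 q p :: real
  assumes s: "0 \<le> r1" "r1 < r2" "r2 \<le> 1/2" and e: "0 \<le> e1" "e1 < e2" "e2 \<le> 1/2"
    and q: "0 < q" "q < 1" and p: "0 < p" "p < 1"
    and inBQ: "in_B 2 (mix2 q r1 r2)"
    and PD: "P_degradation 2 (mix2 q r1 r2) (mix2 p e1 e2)"
  shows "(1-p)*e1 + p*e2 = (1-q)*r1 + q*r2 \<and> r1 \<le> e1 \<and> e2 \<le> r2"
proof -
  from PD obtain T where W: "\<And>x. mix2 p e1 e2 x = bind_pmf (mix2 q r1 r2 x) T"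
    and opt: "\<And>W'. in_B 2 W' \<and> degraded W' (mix2 q r1 r2) \<Longrightarrow> P_err (mix2 p e1 e2) \<le> P_err W'"
    unfolding P_degradation_def degraded_def by blast
  have "degraded (mix2 q r1 r2) (mix2 q r1 r2)"
    unfolding degraded_def by (rule exI[of _ return_pmf]) (simp add: bind_return_pmf')
  with opt inBQ have le1: "P_err (mix2 p e1 e2) \<le> P_err (mix2 q r1 r2)" by blast
  have qq: "0 \<le> q" "q \<le> 1" "0 \<le> r1" "r1 \<le> 1" "0 \<le> r2" "r2 \<le> 1" using q s by auto
  have pp: "0 \<le> p" "p \<le> 1" using p by auto
  have dpc: "(\<Sum>y. min (c * pmf (mix2 q r1 r2 False) y) (d * pmf (mix2 q r1 r2 True) y))
          \<le> (\<Sum>y. min (c * pmf (mix2 p e1 e2 False) y) (d * pmf (mix2 p e1 e2 True) y))"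
    if "0 \<le> c" "0 \<le> d" for c d
    by (rule dp_mix[OF qq W that])
  have "2 * ((1-q)*r1 + q*r2) \<le> 2 * ((1-p)*e1 + p*e2)"
    using dpc[of 1 1] R1_mix2[of q r1 r2] R1_mix2[of p e1 e2] q s e p by simp
  then have "(1-q)*r1 + q*r2 \<le> (1-p)*e1 + p*e2" by simp
  moreover have "P_err (mix2 p e1 e2) = (1-p)*e1 + p*e2" by (rule Perr_mix2) (use p e in auto)
  moreover have "P_err (mix2 q r1 r2) = (1-q)*r1 + q*r2" by (rule Perr_mix2) (use q s in auto)
  ultimately have mean: "(1-p)*e1 + p*e2 = (1-q)*r1 + q*r2" using le1 by linarith
  have L1: "(1-q) * min r1 r1 + q * min r2 r1 \<le> (1-p) * min e1 r1 + p * min e2 r1"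
    using dpc[of "1-r1" r1] Rl_mix2[of q r1 r2 r1] Rl_mix2[of p e1 e2 r1] q s e p by simp
  have L2: "(1-q) * min r1 r2 + q * min r2 r2 \<le> (1-p) * min e1 r2 + p * min e2 r2"
    using dpc[of "1-r2" r2] Rl_mix2[of q r1 r2 r2] Rl_mix2[of p e1 e2 r2] q s e p by simp
  have "r1 \<le> e1"
  proof (rule ccontr)
    assume "\<not> r1 \<le> e1"
    then have "(1-p) * e1 < (1-p) * r1" using p by simp
    moreover have "p * min e2 r1 \<le> p * r1" using p by (simp add: mult_left_mono)
    moreover have "(1-q) * min r1 r1 + q * min r2 r1 = r1" using s by (simp add: algebra_simps)
    ultimately show False using L1 \<open>\<not> r1 \<le> e1\<close> by (simp add: min_def split: if_splits; argo)
  qed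
  moreover have "e2 \<le> r2"
  proof (rule ccontr)
    assume "\<not> e2 \<le> r2"
    then have "p * r2 < p * e2" using p by simp
    moreover have "(1-p) * min e1 r2 \<le> (1-p) * e1" using p by (simp add: mult_left_mono)
    moreover have "(1-q) * min r1 r2 + q * min r2 r2 = (1-q)*r1 + q*r2" using s by simp
    ultimately show False using L2 mean \<open>\<not> e2 \<le> r2\<close> by (simp add: min_def split: if_splits)
  qed
  ultimately show ?thesis using mean by blast
qed


theorem lemma5:
  fixes \<sigma>1 \<sigma>2 \<epsilon>1 \<epsilon>2 q :: real
  assumes "0 \<le> \<sigma>1" "\<sigma>1 < \<sigma>2" "\<sigma>2 \<le> 1/2"
    and "0 \<le> \<epsilon>1" "\<epsilon>1 < \<epsilon>2" "\<epsilon>2 \<le> 1/2"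
    and "0 < q" "q < 1"
    and "in_B_star 2 (mix2 q \<sigma>1 \<sigma>2)"
  shows "((\<exists>p. 0 < p \<and> p < 1 \<and> P_degradation 2 (mix2 q \<sigma>1 \<sigma>2) (mix2 p \<epsilon>1 \<epsilon>2))
          \<longleftrightarrow> (\<sigma>1 \<le> \<epsilon>1 \<and> \<epsilon>1 < (1 - q) * \<sigma>1 + q * \<sigma>2 \<and>
               (1 - q) * \<sigma>1 + q * \<sigma>2 < \<epsilon>2 \<and> \<epsilon>2 \<le> \<sigma>2))
       \<and> (\<forall>p. 0 < p \<and> p < 1 \<and> P_degradation 2 (mix2 q \<sigma>1 \<sigma>2) (mix2 p \<epsilon>1 \<epsilon>2)
              \<longrightarrow> (1 - p) * \<epsilon>1 + p * \<epsilon>2 = (1 - q) * \<sigma>1 + q * \<sigma>2)"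
proof -
  have inBQ: "in_B 2 (mix2 q \<sigma>1 \<sigma>2)" using assms(9) unfolding in_B_star_def by blast
  note K = key[OF assms(1-8) _ _ inBQ]
  define m where "m = (1 - q) * \<sigma>1 + q * \<sigma>2"
  have fwd: "\<sigma>1 \<le> \<epsilon>1 \<and> \<epsilon>1 < m \<and> m < \<epsilon>2 \<and> \<epsilon>2 \<le> \<sigma>2"
    if "0 < p" "p < 1" "P_degradation 2 (mix2 q \<sigma>1 \<sigma>2) (mix2 p \<epsilon>1 \<epsilon>2)" for p
  proof -
    from K[OF that] have mean: "(1-p)*\<epsilon>1 + p*\<epsilon>2 = m" and "\<sigma>1 \<le> \<epsilon>1" "\<epsilon>2 \<le> \<sigma>2"
      unfolding m_def by auto
    have "0 < p * (\<epsilon>2 - \<epsilon>1)" using that assms by simp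
    moreover have "0 < (1-p) * (\<epsilon>2 - \<epsilon>1)" using that assms by simp
    ultimately show ?thesis using mean \<open>\<sigma>1 \<le> \<epsilon>1\<close> \<open>\<epsilon>2 \<le> \<sigma>2\<close> by (simp add: algebra_simps)
  qed
  have bwd: "\<exists>p. 0 < p \<and> p < 1 \<and> P_degradation 2 (mix2 q \<sigma>1 \<sigma>2) (mix2 p \<epsilon>1 \<epsilon>2)"
    if c: "\<sigma>1 \<le> \<epsilon>1" "\<epsilon>1 < m" "m < \<epsilon>2" "\<epsilon>2 \<le> \<sigma>2"
  proof -
    define p where "p = (m - \<epsilon>1) / (\<epsilon>2 - \<epsilon>1)"
    have d: "\<epsilon>2 - \<epsilon>1 > 0" using assms by simp
    have p0: "0 < p" unfolding p_def using c d by simp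
    have p1: "p < 1" unfolding p_def using c d by simp
    have h: "p * (\<epsilon>2 - \<epsilon>1) = m - \<epsilon>1" unfolding p_def using d by simp
    have "(1-p)*\<epsilon>1 + p*\<epsilon>2 = \<epsilon>1 + p * (\<epsilon>2 - \<epsilon>1)" by (simp add: algebra_simps)
    then have mean: "(1-p)*\<epsilon>1 + p*\<epsilon>2 = m" using h by simp
    have deg: "degraded (mix2 p \<epsilon>1 \<epsilon>2) (mix2 q \<sigma>1 \<sigma>2)"
      by (rule constr[OF _ _ _ c(1) assms(5) c(4) p0 p1 mean[unfolded m_def] assms(7,8)]) (use assms in auto)
    have inB: "in_B 2 (mix2 p \<epsilon>1 \<epsilon>2)"
      unfolding in_B_def
      apply (rule exI[of _ "\<lambda>i. if i = 0 then 1 - p else p"])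
      apply (rule exI[of _ "\<lambda>i. if i = 0 then \<epsilon>1 else \<epsilon>2"])
      using p0 p1 assms by (auto simp: prob_vec_def mix2_def chan_equiv_def numeral_2_eq_2 lessThan_Suc)
    have PW: "P_err (mix2 p \<epsilon>1 \<epsilon>2) = m" using Perr_mix2[of p \<epsilon>1 \<epsilon>2] p0 p1 assms mean by simp
    have PQ: "P_err (mix2 q \<sigma>1 \<sigma>2) = m" using Perr_mix2[of q \<sigma>1 \<sigma>2] assms unfolding m_def by simp
    have opt: "P_err (mix2 p \<epsilon>1 \<epsilon>2) \<le> P_err W'" if dg: "degraded W' (mix2 q \<sigma>1 \<sigma>2)" for W'
    proof -
      obtain T where W: "\<And>x. W' x = bind_pmf (mix2 q \<sigma>1 \<sigma>2 x) T"
        using dg unfolding degraded_def by blast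
      have "(\<Sum>y. min (1 * pmf (mix2 q \<sigma>1 \<sigma>2 False) y) (1 * pmf (mix2 q \<sigma>1 \<sigma>2 True) y))
          \<le> (\<Sum>y. min (1 * pmf (W' False) y) (1 * pmf (W' True) y))"
        by (rule dp_mix[OF _ _ _ _ _ _ W]) (use assms in auto)
      then have "P_err (mix2 q \<sigma>1 \<sigma>2) \<le> P_err W'" unfolding P_err_def by simp
      then show ?thesis using PW PQ by simp
    qed
    show ?thesis using p0 p1 deg inB opt unfolding P_degradation_def by blast
  qed
  show ?thesis
    unfolding m_def[symmetric]
    using fwd bwd K unfolding m_def by blast
qed

end
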